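(* Fix $\beta>0$ and $u\in\mathbb S^{d-1}$, and let $\mathcal O_u:=\{R_\theta u:\theta\in\mathbb R\}$. For a measurable antisymmetric phase kernel $g:I\times I\to\mathbb R$ ($g(t,s)=-g(s,t)$) set $h_g((x,s),(y,t)):=\beta^{-1}\exp(\beta\langle x,R_{g(s,t)}y\rangle)$ and $\mathcal E_g[\mu]:=\frac12\iint h_g\,d\mu\,d\mu$. (i) Given a measurable $\psi:I\to\mathbb R$, put $g(s,t):=-(\psi(t)-\psi(s))\ (\mathrm{mod}\ 2\pi)$, $x^\psi(s):=R_{\psi(s)}u$ and $\mu^\ast:=\Gamma[x^\psi]$. Then $\mathcal E_g[\mu]\le\mathcal E_g[\mu^\ast]=e^\beta/(2\beta)$ for all $\mu\in\mathcal P_I$; thus $\mu^\ast$ is a global maximizer on $\mathcal P_I$. (ii) For every Borel probability measure $\nu$ on $\mathcal O_u$ there is a measurable $\psi:I\to\mathbb R$ such that the maximizer $\mu^\ast$ of (i) satisfies $(\pi_x)_{\#}\mu^\ast=(x^\psi)_{\#}ds=\nu$. (iii) For $\psi$ and $g$ as in (i), if $\mu\in\mathcal P_I$ satisfies $\mathcal E_g[\mu]=e^\beta/(2\beta)$, then there is a measurable $x:I\to\mathbb S^{d-1}$ with $\mu=\Gamma[x]$ and $x(t)=R_{\psi(t)-\psi(s)}x(s)$ for a.e. $(s,t)$; hence there exists $u'\in\mathbb S^{d-1}$ with $x(s)=R_{\psi(s)}u'$ for a.e. $s$.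
   Context: $\mathbb S^{d-1}\subset\mathbb R^d$ ($d\ge2$). $I:=(0,1]$ with Lebesgue measure $ds$; $\mathcal P_I$ is the set of Borel probability measures on $\mathbb S^{d-1}\times I$ with $I$-marginal $ds$. A fixed two-dimensional subspace $E\subset\mathbb R^d$ is given; $R_\theta\in O(d)$ rotates by angle $\theta$ on $E$ and is the identity on $E^\perp$ (so $R_\theta$ is $2\pi$-periodic in $\theta$). For measurable $x:I\to\mathbb S^{d-1}$, $\Gamma[x]:=(s\mapsto(x(s),s))_{\#}ds$. $\pi_x$ is the projection onto the sphere coordinate. *)

theory Defs
  imports "HOL-Probability.Probability"
begin

definition Iset :: "real set" where "Iset = {0<..1}"

definition Imeas :: "real measure" where "Imeas = restrict_space lborel Iset"

text \<open>Rotation R_theta by angle theta on the plane E spanned by the orthonormal pair (e1,e2)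
  (oriented from e1 towards e2), identity on the orthogonal complement of E.\<close>
definition rot :: "'a::euclidean_space \<Rightarrow> 'a \<Rightarrow> real \<Rightarrow> 'a \<Rightarrow> 'a" where
  "rot e1 e2 \<theta> x = x
     + ((cos \<theta> - 1) * (x \<bullet> e1) - sin \<theta> * (x \<bullet> e2)) *\<^sub>R e1
     + (sin \<theta> * (x \<bullet> e1) + (cos \<theta> - 1) * (x \<bullet> e2)) *\<^sub>R e2"

definition PI :: "('a::euclidean_space \<times> real) measure set" where
  "PI = {\<mu>. prob_space \<mu> \<and> sets \<mu> = sets (borel :: ('a \<times> real) measure)
           \<and> emeasure \<mu> (sphere 0 1 \<times> Iset) = 1
           \<and> (\<forall>A \<in> sets (borel :: real measure).
                 emeasure \<mu> (snd -` A) = emeasure lborel (A \<inter> Iset))}"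

definition Gamma :: "(real \<Rightarrow> 'a::euclidean_space) \<Rightarrow> ('a \<times> real) measure" where
  "Gamma x = distr Imeas borel (\<lambda>s. (x s, s))"

definition energy :: "real \<Rightarrow> 'a::euclidean_space \<Rightarrow> 'a \<Rightarrow> (real \<Rightarrow> real \<Rightarrow> real)
                        \<Rightarrow> ('a \<times> real) measure \<Rightarrow> real" where
  "energy \<beta> e1 e2 g \<mu> = 1/2 * (\<integral>p. (\<integral>q. exp (\<beta> * (fst p \<bullet> rot e1 e2 (g (snd p) (snd q)) (fst q))) / \<beta> \<partial>\<mu>) \<partial>\<mu>)"

text \<open>Phase kernel from psi: g(s,t) = -(psi t - psi s) mod 2pi on I x I (set to 0 outside I x I,
  where the paper leaves it undefined).\<close>
definition phase_kernel :: "(real \<Rightarrow> real) \<Rightarrow> real \<Rightarrow> real \<Rightarrow> real" where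
  "phase_kernel \<psi> s t =
     (if s \<in> Iset \<and> t \<in> Iset
      then (let a = - (\<psi> t - \<psi> s) in a - 2 * pi * of_int \<lfloor>a / (2 * pi)\<rfloor>)
      else 0)"

end

theory Submission
  imports Defs
begin


context
  fixes e1 e2 :: "'a::euclidean_space"
  assumes E: "norm e1 = 1" "norm e2 = 1" "e1 \<bullet> e2 = 0"
begin

lemma e11: "e1 \<bullet> e1 = 1" using E by (simp add: norm_eq_1)
lemma e22: "e2 \<bullet> e2 = 1" using E by (simp add: norm_eq_1)
lemma e21: "e2 \<bullet> e1 = 0" using E by (simp add: inner_commute)

lemma rot_e1: "rot e1 e2 t y \<bullet> e1 = cos t * (y \<bullet> e1) - sin t * (y \<bullet> e2)"
  unfolding rot_def using e11 e22 e21 E(3)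
  by (simp add: inner_add_left algebra_simps)

lemma rot_e2: "rot e1 e2 t y \<bullet> e2 = sin t * (y \<bullet> e1) + cos t * (y \<bullet> e2)"
  unfolding rot_def using e11 e22 e21 E(3)
  by (simp add: inner_add_left algebra_simps)

lemma comb_eq: "a = c \<Longrightarrow> b = d \<Longrightarrow> y + a *\<^sub>R e1 + b *\<^sub>R e2 = y + c *\<^sub>R e1 + d *\<^sub>R e2"
  by simp

lemma rot_add: "rot e1 e2 a (rot e1 e2 b y) = rot e1 e2 (a + b) y"
proof -
  have "rot e1 e2 a (rot e1 e2 b y) = y
     + (((cos b - 1) * (y \<bullet> e1) - sin b * (y \<bullet> e2)) + ((cos a - 1) * (rot e1 e2 b y \<bullet> e1) - sin a * (rot e1 e2 b y \<bullet> e2))) *\<^sub>R e1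
     + ((sin b * (y \<bullet> e1) + (cos b - 1) * (y \<bullet> e2)) + (sin a * (rot e1 e2 b y \<bullet> e1) + (cos a - 1) * (rot e1 e2 b y \<bullet> e2))) *\<^sub>R e2"
    by (simp add: rot_def[of _ _ a] rot_def[of _ _ b y] scaleR_add_left algebra_simps)
       (simp only: mult.commute[of _ 2] scaleR_scaleR[symmetric] scaleR_2 add_ac)
  also have "\<dots> = rot e1 e2 (a + b) y"
    unfolding rot_def[of _ _ "a+b"]
    by (rule comb_eq) (simp_all add: rot_e1 rot_e2 cos_add sin_add algebra_simps)
  finally show ?thesis .
qed

lemma rot_0[simp]: "rot e1 e2 0 y = y" by (simp add: rot_def)

lemma rot_cong: "cos a = cos b \<Longrightarrow> sin a = sin b \<Longrightarrow> rot e1 e2 a y = rot e1 e2 b y"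
  by (simp add: rot_def)

lemma rot_period: "rot e1 e2 (a + 2 * pi * of_int k) y = rot e1 e2 a y"
  by (rule rot_cong) (simp_all add: cos_add sin_add)

lemma comb_sq: "(y + a *\<^sub>R e1 + b *\<^sub>R e2) \<bullet> (y + a *\<^sub>R e1 + b *\<^sub>R e2)
   = y \<bullet> y + 2 * a * (y \<bullet> e1) + 2 * b * (y \<bullet> e2) + a^2 + b^2"
  using e11 e22 e21 E(3)
  by (simp add: inner_add_left inner_add_right inner_commute[of e1 y] inner_commute[of e2 y]
       power2_eq_square algebra_simps)

lemma trig_aux: "(cc::real) * cc + ss * ss = 1 \<Longrightarrow> cc * (cc * P) + (cc * (cc * Q) + (ss * (ss * P) + ss * (ss * Q))) = P + Q"
proof -
  assume h: "cc * cc + ss * ss = 1"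
  have "cc * (cc * P) + (cc * (cc * Q) + (ss * (ss * P) + ss * (ss * Q))) = (cc * cc + ss * ss) * (P + Q)" by (simp add: algebra_simps)
  then show ?thesis using h by simp
qed

lemma rot_norm: "norm (rot e1 e2 t x) = norm x"
proof -
  have "rot e1 e2 t x \<bullet> rot e1 e2 t x = x \<bullet> x"
    unfolding rot_def comb_sq
    using sin_cos_squared_add[of t]
    by (simp add: power2_eq_square algebra_simps) (rule trig_aux, simp add: power2_eq_square)
  then show ?thesis by (simp add: norm_eq_sqrt_inner)
qed

end


lemma fst_borel[measurable]: "fst \<in> borel_measurable (borel :: ('a::second_countable_topology \<times> 'b::second_countable_topology) measure)"
  by (subst borel_prod[symmetric]) simp

lemma snd_borel[measurable]: "snd \<in> borel_measurable (borel :: ('a::second_countable_topology \<times> 'b::second_countable_topology) measure)"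
  by (subst borel_prod[symmetric]) simp

lemma Iset_borel[measurable]: "Iset \<in> sets borel"
  by (simp add: Iset_def)

lemma space_Imeas[simp]: "space Imeas = Iset"
  by (simp add: Imeas_def space_restrict_space)

lemma psi_ext:
  fixes \<psi> :: "real \<Rightarrow> real"
  assumes "\<psi> \<in> borel_measurable Imeas"
  shows "(\<lambda>t. indicator Iset t *\<^sub>R \<psi> t) \<in> borel_measurable borel"
proof -
  have "(\<lambda>t. indicator Iset t *\<^sub>R \<psi> t) \<in> borel_measurable lborel"
    using assms borel_measurable_restrict_space_iff[of Iset lborel \<psi>] unfolding Imeas_def
    by simp
  then show ?thesis by simp
qed

lemma rot_meas[measurable (raw)]:
  assumes "f \<in> borel_measurable M" "g \<in> borel_measurable M"
  shows "(\<lambda>x. rot e1 e2 (f x) (g x)) \<in> borel_measurable M"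
  unfolding rot_def using assms by measurable

lemma pk_meas:
  assumes \<psi>: "\<psi> \<in> borel_measurable Imeas"
    and f[measurable]: "f \<in> borel_measurable M" and g[measurable]: "g \<in> borel_measurable M"
  shows "(\<lambda>x. phase_kernel \<psi> (f x) (g x)) \<in> borel_measurable M"
proof -
  define \<phi> where "\<phi> = (\<lambda>t. indicator Iset t *\<^sub>R \<psi> t)"
  have [measurable]: "\<phi> \<in> borel_measurable borel" using psi_ext[OF \<psi>] by (simp add: \<phi>_def)
  have eq: "phase_kernel \<psi> (f x) (g x) = (if f x \<in> Iset \<and> g x \<in> Iset then
     (- (\<phi> (g x) - \<phi> (f x))) - 2 * pi * of_int \<lfloor>(- (\<phi> (g x) - \<phi> (f x))) / (2 * pi)\<rfloor> else 0)" for x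
    by (simp add: phase_kernel_def \<phi>_def Let_def)
  show ?thesis unfolding eq by measurable
qed

lemma pk_meas_Imeas:
  assumes \<psi>: "\<psi> \<in> borel_measurable Imeas"
  shows "(\<lambda>x. rot e1 e2 (\<psi> x) u) \<in> borel_measurable Imeas"
  using assms by measurable

lemma graph_meas:
  fixes x :: "real \<Rightarrow> 'a::euclidean_space"
  assumes "x \<in> borel_measurable Imeas"
  shows "(\<lambda>s. (x s, s)) \<in> measurable Imeas borel"
proof -
  have "(\<lambda>s. (x s, s)) \<in> measurable Imeas (borel \<Otimes>\<^sub>M borel)"
    using assms unfolding Imeas_def
    by (intro measurable_Pair) (auto intro: measurable_restrict_space1)
  then show ?thesis by (simp add: borel_prod)
qed

definition FF :: "real \<Rightarrow> 'a::euclidean_space \<Rightarrow> 'a \<Rightarrow> (real \<Rightarrow> real \<Rightarrow> real) \<Rightarrow> ('a \<times> real) \<Rightarrow> ('a \<times> real) \<Rightarrow> real"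
  where "FF \<beta> e1 e2 g p q = exp (\<beta> * (fst p \<bullet> rot e1 e2 (g (snd p) (snd q)) (fst q))) / \<beta>"

lemma energy_FF: "energy \<beta> e1 e2 g \<mu> = 1/2 * (\<integral>p. (\<integral>q. FF \<beta> e1 e2 g p q \<partial>\<mu>) \<partial>\<mu>)"
  by (simp add: energy_def FF_def)

lemma FF_meas:
  assumes \<psi>: "\<psi> \<in> borel_measurable Imeas"
    and P[measurable]: "P \<in> borel_measurable M" and Q[measurable]: "Q \<in> borel_measurable M"
  shows "(\<lambda>x. FF \<beta> e1 e2 (phase_kernel \<psi>) (P x) (Q x)) \<in> borel_measurable M"
proof -
  have [measurable]: "(\<lambda>x. phase_kernel \<psi> (snd (P x)) (snd (Q x))) \<in> borel_measurable M"
    by (rule pk_meas[OF \<psi>]) measurable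
  show ?thesis unfolding FF_def by measurable
qed



lemma int_le_const:
  fixes f :: "'b \<Rightarrow> real"
  assumes "prob_space M" "AE x in M. f x \<le> c" "0 \<le> c"
  shows "integral\<^sup>L M f \<le> c"
proof (cases "integrable M f")
  case True
  interpret prob_space M by fact
  have "integral\<^sup>L M f \<le> integral\<^sup>L M (\<lambda>_. c)"
    by (rule integral_mono_AE[OF True _ assms(2)]) simp
  then show ?thesis by (simp add: prob_space)
next
  case False
  then show ?thesis using assms by (simp add: not_integrable_integral_eq)
qed

lemma int_eq_const_AE:
  fixes f :: "'b \<Rightarrow> real"
  assumes "prob_space M" "AE x in M. f x \<le> c" "c \<noteq> 0" "integral\<^sup>L M f = c"
  shows "AE x in M. f x = c"
proof -
  interpret prob_space M by fact
  have int: "integrable M f" using assms(3,4) not_integrable_integral_eq by metis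
  have int2: "integrable M (\<lambda>x. c - f x)" using int by simp
  have "integral\<^sup>L M (\<lambda>x. c - f x) = 0" using int assms(4) by (simp add: prob_space)
  then have "AE x in M. c - f x = 0"
    using integral_nonneg_eq_0_iff_AE[OF int2] assms(2) by simp
  then show ?thesis by auto
qed

lemma AE_ex:
  assumes "prob_space M" "AE x in M. P x"
  shows "\<exists>x\<in>space M. P x"
proof (rule ccontr)
  assume "\<not> ?thesis"
  then have "{x\<in>space M. \<not> P x} = space M" by auto
  moreover have "emeasure M {x\<in>space M. \<not> P x} = 0" using AE_E2[OF assms(2)] .
  ultimately show False using prob_space.emeasure_space_1[OF assms(1)] by simp
qed

lemma prob_Imeas: "prob_space Imeas"
  unfolding Imeas_def
  by (rule prob_spaceI) (simp add: emeasure_restrict_space space_restrict_space Iset_def)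

lemma pk_shift:
  fixes e1 e2 :: "'a::euclidean_space"
  assumes E: "norm e1 = 1" "norm e2 = 1" "e1 \<bullet> e2 = 0"
    and st: "s \<in> Iset" "t \<in> Iset"
  shows "rot e1 e2 (phase_kernel \<psi> s t) y = rot e1 e2 (\<psi> s - \<psi> t) y"
proof -
  have eq: "phase_kernel \<psi> s t = (\<psi> s - \<psi> t) + 2 * pi * of_int (- \<lfloor>(- (\<psi> t - \<psi> s)) / (2 * pi)\<rfloor>)"
    using st by (simp add: phase_kernel_def Let_def)
  show ?thesis unfolding eq by (rule rot_period[OF E])
qed

lemma pk_graph:
  fixes e1 e2 :: "'a::euclidean_space"
  assumes E: "norm e1 = 1" "norm e2 = 1" "e1 \<bullet> e2 = 0"
    and st: "s \<in> Iset" "t \<in> Iset"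
  shows "rot e1 e2 (phase_kernel \<psi> s t) (rot e1 e2 (\<psi> t) u) = rot e1 e2 (\<psi> s) u"
  using pk_shift[OF E st, of \<psi>] rot_add[OF E, of "\<psi> s - \<psi> t" "\<psi> t" u] by simp

lemma part1_eq:
  fixes \<beta> :: real and u e1 e2 :: "'a::euclidean_space"
  assumes E: "norm e1 = 1" "norm e2 = 1" "e1 \<bullet> e2 = 0"
    and \<beta>: "\<beta> > 0"
    and u: "u \<in> sphere 0 1"
    and \<psi>: "\<psi> \<in> borel_measurable Imeas"
  shows "energy \<beta> e1 e2 (phase_kernel \<psi>) (Gamma (\<lambda>s. rot e1 e2 (\<psi> s) u)) = exp \<beta> / (2 * \<beta>)"
proof -
  define x where "x = (\<lambda>s. rot e1 e2 (\<psi> s) u)"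
  define G where "G = Gamma x"
  define F where "F = FF \<beta> e1 e2 (phase_kernel \<psi>)"
  have xm: "x \<in> borel_measurable Imeas" unfolding x_def using \<psi> by measurable
  have gm: "(\<lambda>s. (x s, s)) \<in> measurable Imeas borel" by (rule graph_meas[OF xm])
  have G: "G = distr Imeas borel (\<lambda>s. (x s, s))" by (simp add: G_def Gamma_def)
  have sG: "sets G = sets borel" by (simp add: G)
  have pG: "prob_space G" unfolding G by (rule prob_space.prob_space_distr[OF prob_Imeas gm])
  have xn: "x s \<bullet> x s = 1" for s
  proof -
    have "norm (x s) = 1" using u rot_norm[OF E, of "\<psi> s" u] by (simp add: x_def)
    then show ?thesis by (simp add: norm_eq_1)
  qed
  have Fc: "F (x s, s) (x t, t) = exp \<beta> / \<beta>" if "s \<in> Iset" "t \<in> Iset" for s t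
    using pk_graph[OF E that, of \<psi> u] xn[of s] by (simp add: F_def FF_def x_def)
  have inner: "(\<integral>q. F (x s, s) q \<partial>G) = exp \<beta> / \<beta>" if s: "s \<in> Iset" for s
  proof -
    have "(\<integral>q. F (x s, s) q \<partial>G) = (\<integral>t. F (x s, s) (x t, t) \<partial>Imeas)"
      unfolding G
      by (rule integral_distr[OF gm]) (unfold F_def, rule FF_meas[OF \<psi>], simp_all)
    also have "\<dots> = (\<integral>t. exp \<beta> / \<beta> \<partial>Imeas)"
      by (rule Bochner_Integration.integral_cong) (simp_all add: Fc s)
    also have "\<dots> = exp \<beta> / \<beta>" using prob_space.prob_space[OF prob_Imeas] by simp
    finally show ?thesis .
  qed
  interpret G: prob_space G by fact
  have im: "(\<lambda>p. \<integral>q. F p q \<partial>G) \<in> borel_measurable borel"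
  proof (rule G.borel_measurable_lebesgue_integral)
    have "(\<lambda>z. F (fst z) (snd z)) \<in> borel_measurable (borel \<Otimes>\<^sub>M borel)"
      unfolding F_def by (rule FF_meas[OF \<psi>]) simp_all
    then have "case_prod F \<in> borel_measurable (borel \<Otimes>\<^sub>M borel)"
      by (simp add: case_prod_unfold)
    then show "case_prod F \<in> borel_measurable (borel \<Otimes>\<^sub>M G)"
      by (subst measurable_cong_sets[OF sets_pair_measure_cong[OF refl sG] refl])
  qed
  have "(\<integral>p. (\<integral>q. F p q \<partial>G) \<partial>G) = (\<integral>s. (\<integral>q. F (x s, s) q \<partial>G) \<partial>Imeas)"
    using integral_distr[OF gm im] by (simp only: G[symmetric])
  also have "\<dots> = (\<integral>s. exp \<beta> / \<beta> \<partial>Imeas)"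
    by (rule Bochner_Integration.integral_cong) (simp_all add: inner)
  also have "\<dots> = exp \<beta> / \<beta>" using prob_space.prob_space[OF prob_Imeas] by simp
  finally show ?thesis
    by (simp add: energy_FF F_def G_def x_def)
qed



lemma unit_eq:
  fixes a b :: "'a::real_inner"
  assumes "norm a = 1" "norm b = 1" "a \<bullet> b = 1"
  shows "a = b"
proof -
  have aa: "a \<bullet> a = 1" using assms(1) norm_eq_1 by blast
  have bb: "b \<bullet> b = 1" using assms(2) norm_eq_1 by blast
  have "(a - b) \<bullet> (a - b) = a \<bullet> a - 2 * (a \<bullet> b) + b \<bullet> b"
    by (simp add: inner_diff_left inner_diff_right inner_commute)
  also have "\<dots> = 0" using aa bb assms(3) by simp
  finally show ?thesis by simp
qed

lemma FF_le:
  fixes e1 e2 :: "'a::euclidean_space"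
  assumes E: "norm e1 = 1" "norm e2 = 1" "e1 \<bullet> e2 = 0"
    and \<beta>: "\<beta> > 0" and p: "fst p \<in> sphere 0 1" and q: "fst q \<in> sphere 0 1"
  shows "FF \<beta> e1 e2 g p q \<le> exp \<beta> / \<beta>"
proof -
  have "fst p \<bullet> rot e1 e2 (g (snd p) (snd q)) (fst q) \<le> norm (fst p) * norm (rot e1 e2 (g (snd p) (snd q)) (fst q))"
    by (rule norm_cauchy_schwarz)
  also have "\<dots> = 1" using p q rot_norm[OF E, of "g (snd p) (snd q)" "fst q"] by (simp add: dist_norm)
  finally have "\<beta> * (fst p \<bullet> rot e1 e2 (g (snd p) (snd q)) (fst q)) \<le> \<beta>"
    using \<beta> mult_left_mono[of _ 1 \<beta>] by auto
  then have "exp (\<beta> * (fst p \<bullet> rot e1 e2 (g (snd p) (snd q)) (fst q))) \<le> exp \<beta>" by simp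
  then show ?thesis unfolding FF_def using \<beta> by (simp add: divide_right_mono)
qed


lemma FF_eq:
  fixes e1 e2 :: "'a::euclidean_space"
  assumes E: "norm e1 = 1" "norm e2 = 1" "e1 \<bullet> e2 = 0"
    and \<beta>: "\<beta> > 0" and p: "fst p \<in> sphere 0 1" and q: "fst q \<in> sphere 0 1"
    and eq: "FF \<beta> e1 e2 g p q = exp \<beta> / \<beta>"
  shows "fst p = rot e1 e2 (g (snd p) (snd q)) (fst q)"
proof -
  have "exp (\<beta> * (fst p \<bullet> rot e1 e2 (g (snd p) (snd q)) (fst q))) = exp \<beta>"
    using eq \<beta> unfolding FF_def by (simp add: divide_cancel_right)
  then have "\<beta> * (fst p \<bullet> rot e1 e2 (g (snd p) (snd q)) (fst q)) = \<beta>" by simp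
  then have i1: "fst p \<bullet> rot e1 e2 (g (snd p) (snd q)) (fst q) = 1" using \<beta> by simp
  have n1: "norm (fst p) = 1" using p by (simp add: dist_norm)
  have n2: "norm (rot e1 e2 (g (snd p) (snd q)) (fst q)) = 1"
    using q rot_norm[OF E, of "g (snd p) (snd q)" "fst q"] by (simp add: dist_norm)
  show ?thesis by (rule unit_eq[OF n1 n2 i1])
qed



context
  fixes \<beta> :: real and u e1 e2 :: "'a::euclidean_space" and \<psi> :: "real \<Rightarrow> real" and \<mu> :: "('a \<times> real) measure"
  assumes E: "norm e1 = 1" "norm e2 = 1" "e1 \<bullet> e2 = 0"
    and \<beta>: "\<beta> > 0"
    and \<psi>: "\<psi> \<in> borel_measurable Imeas"
    and \<mu>: "\<mu> \<in> PI"
begin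

definition "SS = sphere (0::'a) 1 \<times> Iset"

lemma mu_prob: "prob_space \<mu>" using \<mu> by (simp add: PI_def)
lemma mu_sets: "sets \<mu> = sets borel" using \<mu> by (simp add: PI_def)

lemma AE_SS: "AE q in \<mu>. q \<in> SS"
proof -
  interpret prob_space \<mu> by (rule mu_prob)
  have "emeasure \<mu> SS = 1" using \<mu> by (simp add: PI_def SS_def)
  then have "prob SS = 1" by (simp add: measure_def)
  then show ?thesis by (rule AE_prob_1)
qed

lemma inner_le: "fst p \<in> sphere 0 1 \<Longrightarrow> (\<integral>q. FF \<beta> e1 e2 (phase_kernel \<psi>) p q \<partial>\<mu>) \<le> exp \<beta> / \<beta>"
proof -
  assume p: "fst p \<in> sphere 0 1"
  have "AE q in \<mu>. FF \<beta> e1 e2 (phase_kernel \<psi>) p q \<le> exp \<beta> / \<beta>"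
    using AE_SS
  proof eventually_elim
    case (elim q)
    then have "fst q \<in> sphere 0 1" by (auto simp: SS_def)
    then show ?case by (rule FF_le[OF E \<beta> p])
  qed
  then show ?thesis by (rule int_le_const[OF mu_prob]) (use \<beta> in simp)
qed

lemma AE_inner_le: "AE p in \<mu>. (\<integral>q. FF \<beta> e1 e2 (phase_kernel \<psi>) p q \<partial>\<mu>) \<le> exp \<beta> / \<beta>"
  using AE_SS
proof eventually_elim
  case (elim q)
  then have "fst q \<in> sphere 0 1" by (auto simp: SS_def)
  then show ?case by (rule inner_le)
qed

lemma energy_le: "energy \<beta> e1 e2 (phase_kernel \<psi>) \<mu> \<le> exp \<beta> / (2 * \<beta>)"
proof -
  have "(\<integral>p. (\<integral>q. FF \<beta> e1 e2 (phase_kernel \<psi>) p q \<partial>\<mu>) \<partial>\<mu>) \<le> exp \<beta> / \<beta>"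
    by (rule int_le_const[OF mu_prob AE_inner_le]) (use \<beta> in simp)
  then show ?thesis unfolding energy_FF by simp
qed


lemma part3:
  assumes eqE: "energy \<beta> e1 e2 (phase_kernel \<psi>) \<mu> = exp \<beta> / (2 * \<beta>)"
  shows "\<exists>x. x \<in> borel_measurable Imeas \<and> (\<forall>s\<in>Iset. x s \<in> sphere 0 1)
           \<and> \<mu> = Gamma x
           \<and> (AE st in Imeas \<Otimes>\<^sub>M Imeas. x (snd st) = rot e1 e2 (\<psi> (snd st) - \<psi> (fst st)) (x (fst st)))
           \<and> (\<exists>u' \<in> sphere 0 1. AE s in Imeas. x s = rot e1 e2 (\<psi> s) u')"
proof -
  define F where "F = FF \<beta> e1 e2 (phase_kernel \<psi>)"
  define C where "C = exp \<beta> / \<beta>"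
  have C0: "C \<noteq> 0" using \<beta> by (simp add: C_def)
  have "(\<integral>p. (\<integral>q. F p q \<partial>\<mu>) \<partial>\<mu>) = C"
    using eqE unfolding energy_FF F_def C_def by simp
  then have "AE p in \<mu>. (\<integral>q. F p q \<partial>\<mu>) = C"
    by (intro int_eq_const_AE[OF mu_prob _ C0]) (use AE_inner_le in \<open>simp_all add: F_def C_def\<close>)
  then have "AE p in \<mu>. (\<integral>q. F p q \<partial>\<mu>) = C \<and> p \<in> SS" using AE_SS by auto
  then obtain p0 where p0: "(\<integral>q. F p0 q \<partial>\<mu>) = C" "p0 \<in> SS"
    using AE_ex[OF mu_prob] by blast
  define x0 where "x0 = fst p0"
  define s0 where "s0 = snd p0"
  have x0: "x0 \<in> sphere 0 1" and s0: "s0 \<in> Iset" using p0(2) by (auto simp: SS_def x0_def s0_def)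
  have "AE q in \<mu>. F p0 q = C"
  proof (rule int_eq_const_AE[OF mu_prob _ C0 p0(1)])
    show "AE q in \<mu>. F p0 q \<le> C"
      using AE_SS
    proof eventually_elim
      case (elim q)
      then have q1: "fst q \<in> sphere 0 1" by (auto simp: SS_def)
      have p1: "fst p0 \<in> sphere 0 1" using x0 by (simp add: x0_def)
      show ?case unfolding F_def C_def by (rule FF_le[OF E \<beta> p1 q1])
    qed
  qed
  define x where "x = (\<lambda>t. rot e1 e2 (\<psi> t - \<psi> s0) x0)"
  have AEx: "AE q in \<mu>. q \<in> SS \<and> fst q = x (snd q)"
    using AE_SS \<open>AE q in \<mu>. F p0 q = C\<close>
  proof eventually_elim
    case (elim q)
    then have q1: "fst q \<in> sphere 0 1" and q2: "snd q \<in> Iset" by (auto simp: SS_def)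
    have "fst p0 = rot e1 e2 (phase_kernel \<psi> (snd p0) (snd q)) (fst q)"
      by (rule FF_eq[OF E \<beta>]) (use elim x0 q1 in \<open>simp_all add: F_def C_def x0_def\<close>)
    then have "x0 = rot e1 e2 (\<psi> s0 - \<psi> (snd q)) (fst q)"
      using pk_shift[OF E s0 q2] by (simp add: x0_def s0_def)
    then have "x (snd q) = rot e1 e2 (\<psi> (snd q) - \<psi> s0) (rot e1 e2 (\<psi> s0 - \<psi> (snd q)) (fst q))"
      by (simp add: x_def)
    also have "\<dots> = fst q" by (simp add: rot_add[OF E] rot_0[OF E])
    finally show ?case using elim by simp
  qed
  have xm: "x \<in> borel_measurable Imeas" unfolding x_def using \<psi> by measurable
  have gm: "(\<lambda>s. (x s, s)) \<in> measurable Imeas borel" by (rule graph_meas[OF xm])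
  have xs: "x s \<in> sphere 0 1" for s
    using x0 rot_norm[OF E, of "\<psi> s - \<psi> s0" x0] by (simp add: x_def dist_norm)
  have "\<mu> = Gamma x"
  proof (rule measure_eqI)
    show "sets \<mu> = sets (Gamma x)" by (simp add: mu_sets Gamma_def)
  next
    fix A assume A: "A \<in> sets \<mu>"
    have "(\<lambda>s. (x s, s)) -` A \<inter> space Imeas \<in> sets Imeas"
      using measurable_sets[OF gm, of A] A mu_sets by simp
    then obtain B where B: "B \<in> sets borel" "(\<lambda>s. (x s, s)) -` A \<inter> Iset = Iset \<inter> B"
      by (auto simp: Imeas_def sets_restrict_space)
    have sB: "snd -` B \<in> sets \<mu>"
      using measurable_sets[OF snd_borel B(1)] mu_sets by simp
    have "emeasure \<mu> A = emeasure \<mu> (snd -` B)"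
    proof (rule emeasure_eq_AE[OF _ A sB])
      show "AE q in \<mu>. (q \<in> A) = (q \<in> snd -` B)"
        using AEx
      proof eventually_elim
        case (elim q)
        then have q2: "snd q \<in> Iset" and q: "q = (x (snd q), snd q)" by (auto simp: SS_def prod_eq_iff)
        have "q \<in> A \<longleftrightarrow> snd q \<in> (\<lambda>s. (x s, s)) -` A \<inter> Iset" using q q2 by (metis IntI IntD1 vimageE vimageI)
        also have "\<dots> \<longleftrightarrow> snd q \<in> B" using B(2) q2 by auto
        finally show ?case by simp
      qed
    qed
    also have "\<dots> = emeasure lborel (B \<inter> Iset)" using \<mu> B(1) by (simp add: PI_def)
    also have "\<dots> = emeasure Imeas ((\<lambda>s. (x s, s)) -` A \<inter> space Imeas)"
      unfolding Imeas_def using B by (subst emeasure_restrict_space) (auto simp: Int_commute)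
    also have "\<dots> = emeasure (Gamma x) A"
      unfolding Gamma_def using A mu_sets by (subst emeasure_distr[OF gm]) simp_all
    finally show "emeasure \<mu> A = emeasure (Gamma x) A" .
  qed
  moreover have "AE st in Imeas \<Otimes>\<^sub>M Imeas. x (snd st) = rot e1 e2 (\<psi> (snd st) - \<psi> (fst st)) (x (fst st))"
    by (rule AE_I2) (simp add: x_def rot_add[OF E] rot_0[OF E])
  moreover have "\<exists>u' \<in> sphere 0 1. AE s in Imeas. x s = rot e1 e2 (\<psi> s) u'"
  proof (intro bexI)
    show "AE s in Imeas. x s = rot e1 e2 (\<psi> s) (rot e1 e2 (- \<psi> s0) x0)"
      by (rule AE_I2) (simp add: x_def rot_add[OF E] rot_0[OF E])
    show "rot e1 e2 (- \<psi> s0) x0 \<in> sphere 0 1"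
      using x0 rot_norm[OF E, of "- \<psi> s0" x0] by (simp add: dist_norm)
  qed
  ultimately show ?thesis using xm xs by blast
qed

end



definition clamp :: "real \<Rightarrow> real" where "clamp z = max (-1) (min 1 z)"

lemma clamp_cont: "continuous_on UNIV (\<lambda>z. arccos (clamp z))"
  unfolding clamp_def by (intro continuous_intros) auto

lemma clamp_meas[measurable]: "(\<lambda>z. arccos (clamp z)) \<in> borel_measurable borel"
  by (rule borel_measurable_continuous_onI[OF clamp_cont])

definition ang :: "'a::euclidean_space \<Rightarrow> 'a \<Rightarrow> 'a \<Rightarrow> 'a \<Rightarrow> real" where
  "ang e1 e2 u y = (let a = u \<bullet> e1; b = u \<bullet> e2; r = a^2 + b^2;
      c = (a * (y \<bullet> e1) + b * (y \<bullet> e2)) / r; s = (a * (y \<bullet> e2) - b * (y \<bullet> e1)) / r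
    in if r = 0 then 0 else if 0 \<le> s then arccos (clamp c) else - arccos (clamp c))"

lemma ang_meas[measurable]: "ang e1 e2 u \<in> borel_measurable borel"
  unfolding ang_def Let_def by measurable

lemma ang_trig:
  assumes "c = cos t" "s = sin t"
  shows "cos (if 0 \<le> s then arccos (clamp c) else - arccos (clamp c)) = cos t \<and>
         sin (if 0 \<le> s then arccos (clamp c) else - arccos (clamp c)) = sin t"
proof -
  have cl: "clamp c = cos t" using assms by (simp add: clamp_def)
  have c1: "cos (arccos (clamp c)) = cos t" unfolding cl by simp
  have "sin (arccos (clamp c)) = sqrt (1 - (cos t)^2)" unfolding cl by (simp add: sin_arccos)
  also have "\<dots> = \<bar>sin t\<bar>" by (simp add: sin_squared_eq[symmetric])
  finally have s1: "sin (arccos (clamp c)) = \<bar>sin t\<bar>" .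
  show ?thesis using c1 s1 assms by auto
qed

lemma ang_rot:
  fixes e1 e2 u :: "'a::euclidean_space"
  assumes E: "norm e1 = 1" "norm e2 = 1" "e1 \<bullet> e2 = 0"
  shows "rot e1 e2 (ang e1 e2 u (rot e1 e2 t u)) u = rot e1 e2 t u"
proof -
  define a where "a = u \<bullet> e1"
  define b where "b = u \<bullet> e2"
  define r where "r = a^2 + b^2"
  show ?thesis
  proof (cases "r = 0")
    case True
    then have "a = 0" "b = 0" unfolding r_def by (auto simp: sum_power2_eq_zero_iff)
    then have "rot e1 e2 t' u = u" for t' by (simp add: rot_def a_def b_def)
    then show ?thesis by simp
  next
    case False
    have y1: "rot e1 e2 t u \<bullet> e1 = cos t * a - sin t * b" by (simp add: rot_e1[OF E] a_def b_def)
    have y2: "rot e1 e2 t u \<bullet> e2 = sin t * a + cos t * b" by (simp add: rot_e2[OF E] a_def b_def)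
    have cc: "(a * (rot e1 e2 t u \<bullet> e1) + b * (rot e1 e2 t u \<bullet> e2)) / r = cos t"
      unfolding y1 y2 using False by (simp add: r_def field_simps power2_eq_square)
    have ss: "(a * (rot e1 e2 t u \<bullet> e2) - b * (rot e1 e2 t u \<bullet> e1)) / r = sin t"
      unfolding y1 y2 using False by (simp add: r_def field_simps power2_eq_square)
    have "ang e1 e2 u (rot e1 e2 t u) = (if 0 \<le> sin t then arccos (clamp (cos t)) else - arccos (clamp (cos t)))"
      unfolding ang_def Let_def a_def[symmetric] b_def[symmetric] r_def[symmetric] cc ss using False by simp
    then show ?thesis using ang_trig[OF refl refl, of t] by (intro rot_cong[OF E]) auto
  qed
qed


lemma Iset_ne1: "x \<noteq> (1::real) \<Longrightarrow> (x \<in> S \<inter> Iset) = (x \<in> S \<inter> {0<..<1})"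
  by (auto simp: Iset_def)

lemma part2:
  fixes e1 e2 u :: "'a::euclidean_space" and \<nu> :: "'a measure"
  assumes E: "norm e1 = 1" "norm e2 = 1" "e1 \<bullet> e2 = 0"
    and \<nu>: "prob_space \<nu>" "sets \<nu> = sets borel" "emeasure \<nu> (range (\<lambda>\<theta>. rot e1 e2 \<theta> u)) = 1"
  shows "\<exists>\<psi>. \<psi> \<in> borel_measurable Imeas
           \<and> distr (Gamma (\<lambda>s. rot e1 e2 (\<psi> s) u)) borel fst = distr Imeas borel (\<lambda>s. rot e1 e2 (\<psi> s) u)
           \<and> distr Imeas borel (\<lambda>s. rot e1 e2 (\<psi> s) u) = \<nu>"
proof -
  interpret \<nu>: prob_space \<nu> by fact
  define h where "h = (\<lambda>\<theta>. rot e1 e2 \<theta> u)"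
  have hm[measurable]: "h \<in> borel_measurable borel" unfolding h_def by measurable
  define A where "A = ang e1 e2 u"
  have Am: "A \<in> measurable \<nu> borel"
    using measurable_cong_sets[OF \<nu>(2) refl] ang_meas unfolding A_def by blast
  define \<rho> where "\<rho> = distr \<nu> borel A"
  have rd: "real_distribution \<rho>"
    unfolding \<rho>_def real_distribution_def real_distribution_axioms_def
    using \<nu>.prob_space_distr[OF Am] by simp
  then have cd: "cdf_distribution \<rho>" by (simp add: cdf_distribution_def)
  define Q where "Q = (\<lambda>\<omega>. Inf {x. \<omega> \<le> cdf \<rho> x})"
  define \<Omega> where "\<Omega> = restrict_space lborel {0<..<1::real}"
  have Qm: "Q \<in> borel_measurable (restrict_space borel {0<..<1})"
    unfolding Q_def by (rule cdf_distribution.measurable_CI[OF cd])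
  have QmO: "Q \<in> borel_measurable \<Omega>"
    using Qm measurable_cong_sets[OF sets_restrict_space_cong[OF sets_lborel] refl] unfolding \<Omega>_def by blast
  have dQ: "distr \<Omega> borel Q = \<rho>"
    unfolding Q_def \<Omega>_def by (rule cdf_distribution.distr_I_eq_M[OF cd])
  define \<psi> where "\<psi> = (\<lambda>t. indicator {0<..<1::real} t *\<^sub>R Q t)"
  have \<psi>b: "\<psi> \<in> borel_measurable borel"
    using Qm borel_measurable_restrict_space_iff[of "{0<..<1::real}" borel Q] unfolding \<psi>_def by simp
  have \<psi>m: "\<psi> \<in> borel_measurable Imeas"
    unfolding Imeas_def using \<psi>b by (intro measurable_restrict_space1) simp
  have hpm: "(\<lambda>s. h (\<psi> s)) \<in> borel_measurable borel" using \<psi>b by measurable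
  have step1: "distr Imeas borel (\<lambda>s. h (\<psi> s)) = distr \<Omega> borel (\<lambda>s. h (\<psi> s))"
  proof (rule measure_eqI)
    fix B assume B: "B \<in> sets (distr Imeas borel (\<lambda>s. h (\<psi> s)))"
    then have B': "B \<in> sets borel" by simp
    have P: "(\<lambda>s. h (\<psi> s)) -` B \<in> sets borel" using measurable_sets[OF hpm B'] by simp
    have "emeasure (distr Imeas borel (\<lambda>s. h (\<psi> s))) B = emeasure lborel ((\<lambda>s. h (\<psi> s)) -` B \<inter> Iset)"
      using B' hpm P unfolding Imeas_def
      by (subst emeasure_distr) (auto intro: measurable_restrict_space1 simp: space_restrict_space emeasure_restrict_space Iset_def)
    also have "\<dots> = emeasure lborel ((\<lambda>s. h (\<psi> s)) -` B \<inter> {0<..<1})"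
    proof (rule emeasure_eq_AE)
      show "AE x in lborel. (x \<in> (\<lambda>s. h (\<psi> s)) -` B \<inter> Iset) = (x \<in> (\<lambda>s. h (\<psi> s)) -` B \<inter> {0<..<1})"
      proof (rule AE_mp[OF AE_lborel_singleton[of "1::real"]], rule AE_I2, rule impI)
        fix x :: real assume "x \<noteq> 1"
        then show "(x \<in> (\<lambda>s. h (\<psi> s)) -` B \<inter> Iset) = (x \<in> (\<lambda>s. h (\<psi> s)) -` B \<inter> {0<..<1})"
          by (rule Iset_ne1)
      qed
    next
      show "(\<lambda>s. h (\<psi> s)) -` B \<inter> Iset \<in> sets lborel"
        unfolding sets_lborel by (rule sets.Int[OF P Iset_borel])
    next
      show "(\<lambda>s. h (\<psi> s)) -` B \<inter> {0<..<1} \<in> sets lborel"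
        unfolding sets_lborel by (rule sets.Int[OF P]) simp
    qed
    also have "\<dots> = emeasure (distr \<Omega> borel (\<lambda>s. h (\<psi> s))) B"
      using B' hpm P unfolding \<Omega>_def
      by (subst emeasure_distr) (auto intro: measurable_restrict_space1 simp: space_restrict_space emeasure_restrict_space)
    finally show "emeasure (distr Imeas borel (\<lambda>s. h (\<psi> s))) B = emeasure (distr \<Omega> borel (\<lambda>s. h (\<psi> s))) B" .
  qed simp
  have step2: "distr \<Omega> borel (\<lambda>s. h (\<psi> s)) = distr \<Omega> borel (\<lambda>s. h (Q s))"
    by (rule distr_cong) (simp_all add: \<Omega>_def space_restrict_space \<psi>_def)
  have step3: "distr \<Omega> borel (\<lambda>s. h (Q s)) = distr \<rho> borel h"
    unfolding dQ[symmetric] using distr_distr[OF hm QmO] by (simp add: comp_def)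
  have step4: "distr \<rho> borel h = distr \<nu> borel (\<lambda>y. h (A y))"
    unfolding \<rho>_def using distr_distr[OF hm Am] by (simp add: comp_def)
  have Osets: "range h \<in> sets \<nu>" using \<nu>(3) emeasure_neq_0_sets unfolding h_def by force
  have "\<nu>.prob (range h) = 1" using \<nu>(3) unfolding h_def by (simp add: measure_def)
  then have AEO: "AE y in \<nu>. y \<in> range h" by (rule \<nu>.AE_prob_1)
  have step5: "distr \<nu> borel (\<lambda>y. h (A y)) = distr \<nu> borel (\<lambda>y. y)"
  proof (rule distr_cong_AE[OF refl refl])
    show "AE y in \<nu>. h (A y) = y"
      using AEO by eventually_elim (auto simp: h_def A_def ang_rot[OF E])
    show "(\<lambda>y. h (A y)) \<in> borel_measurable \<nu>" using measurable_comp[OF Am hm] by (simp add: comp_def)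
    show "(\<lambda>y. y) \<in> borel_measurable \<nu>" by (rule measurable_ident_sets) (simp add: \<nu>(2))
  qed
  have step6: "distr \<nu> borel (\<lambda>y. y) = \<nu>" by (rule distr_id2) (simp add: \<nu>(2))
  have final: "distr Imeas borel (\<lambda>s. rot e1 e2 (\<psi> s) u) = \<nu>"
    using step1 step2 step3 step4 step5 step6 unfolding h_def by simp
  have xm: "(\<lambda>s. rot e1 e2 (\<psi> s) u) \<in> borel_measurable Imeas" using \<psi>m by measurable
  have fstd: "distr (Gamma (\<lambda>s. rot e1 e2 (\<psi> s) u)) borel fst = distr Imeas borel (\<lambda>s. rot e1 e2 (\<psi> s) u)"
    unfolding Gamma_def using distr_distr[OF fst_borel graph_meas[OF xm]] by (simp add: comp_def)
  show ?thesis using \<psi>m fstd final by blast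
qed


theorem theorem3p3:
  fixes \<beta> :: real and u e1 e2 :: "'a::euclidean_space"
  assumes dim: "DIM('a) \<ge> 2"
    and E: "norm e1 = 1" "norm e2 = 1" "e1 \<bullet> e2 = 0"
    and \<beta>: "\<beta> > 0"
    and u: "u \<in> sphere 0 1"
  shows
    "(\<forall>\<psi>. \<psi> \<in> borel_measurable Imeas \<longrightarrow>
        (\<forall>\<mu> \<in> PI. energy \<beta> e1 e2 (phase_kernel \<psi>) \<mu>
                 \<le> energy \<beta> e1 e2 (phase_kernel \<psi>) (Gamma (\<lambda>s. rot e1 e2 (\<psi> s) u)))
      \<and> energy \<beta> e1 e2 (phase_kernel \<psi>) (Gamma (\<lambda>s. rot e1 e2 (\<psi> s) u)) = exp \<beta> / (2 * \<beta>))
   \<and> (\<forall>\<nu>::'a measure. prob_space \<nu> \<and> sets \<nu> = sets borel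
        \<and> emeasure \<nu> (range (\<lambda>\<theta>. rot e1 e2 \<theta> u)) = 1 \<longrightarrow>
        (\<exists>\<psi>. \<psi> \<in> borel_measurable Imeas
           \<and> distr (Gamma (\<lambda>s. rot e1 e2 (\<psi> s) u)) borel fst = distr Imeas borel (\<lambda>s. rot e1 e2 (\<psi> s) u)
           \<and> distr Imeas borel (\<lambda>s. rot e1 e2 (\<psi> s) u) = \<nu>))
   \<and> (\<forall>\<psi> \<mu>. \<psi> \<in> borel_measurable Imeas \<longrightarrow> \<mu> \<in> PI \<longrightarrow>
        energy \<beta> e1 e2 (phase_kernel \<psi>) \<mu> = exp \<beta> / (2 * \<beta>) \<longrightarrow>
        (\<exists>x. x \<in> borel_measurable Imeas \<and> (\<forall>s\<in>Iset. x s \<in> sphere 0 1)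
           \<and> \<mu> = Gamma x
           \<and> (AE st in Imeas \<Otimes>\<^sub>M Imeas. x (snd st) = rot e1 e2 (\<psi> (snd st) - \<psi> (fst st)) (x (fst st)))
           \<and> (\<exists>u' \<in> sphere 0 1. AE s in Imeas. x s = rot e1 e2 (\<psi> s) u')))"
proof -
  have c1: "\<forall>\<psi>. \<psi> \<in> borel_measurable Imeas \<longrightarrow>
        (\<forall>\<mu> \<in> PI. energy \<beta> e1 e2 (phase_kernel \<psi>) \<mu>
                 \<le> energy \<beta> e1 e2 (phase_kernel \<psi>) (Gamma (\<lambda>s. rot e1 e2 (\<psi> s) u)))
      \<and> energy \<beta> e1 e2 (phase_kernel \<psi>) (Gamma (\<lambda>s. rot e1 e2 (\<psi> s) u)) = exp \<beta> / (2 * \<beta>)"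
    using energy_le[OF E \<beta>] part1_eq[OF E \<beta> u] by simp
  have c2: "\<forall>\<nu>::'a measure. prob_space \<nu> \<and> sets \<nu> = sets borel
        \<and> emeasure \<nu> (range (\<lambda>\<theta>. rot e1 e2 \<theta> u)) = 1 \<longrightarrow>
        (\<exists>\<psi>. \<psi> \<in> borel_measurable Imeas
           \<and> distr (Gamma (\<lambda>s. rot e1 e2 (\<psi> s) u)) borel fst = distr Imeas borel (\<lambda>s. rot e1 e2 (\<psi> s) u)
           \<and> distr Imeas borel (\<lambda>s. rot e1 e2 (\<psi> s) u) = \<nu>)"
    using part2[OF E] by blast
  have c3: "\<forall>\<psi> \<mu>. \<psi> \<in> borel_measurable Imeas \<longrightarrow> \<mu> \<in> PI \<longrightarrow>
        energy \<beta> e1 e2 (phase_kernel \<psi>) \<mu> = exp \<beta> / (2 * \<beta>) \<longrightarrow>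
        (\<exists>x. x \<in> borel_measurable Imeas \<and> (\<forall>s\<in>Iset. x s \<in> sphere 0 1)
           \<and> \<mu> = Gamma x
           \<and> (AE st in Imeas \<Otimes>\<^sub>M Imeas. x (snd st) = rot e1 e2 (\<psi> (snd st) - \<psi> (fst st)) (x (fst st)))
           \<and> (\<exists>u' \<in> sphere 0 1. AE s in Imeas. x s = rot e1 e2 (\<psi> s) u'))"
    using part3[OF E \<beta>] by blast
  show ?thesis using c1 c2 c3 by blast
qed

end
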